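(* For every integer $n\ge 3$, $$d_3(n)=\begin{cases} n+\tfrac13 n & \text{if } n\equiv 0 \pmod 6,\\ n-\tfrac16 (n-1) & \text{if } n\equiv 1 \pmod 6,\\ n+\tfrac13 (n-2) & \text{if } n\equiv 2 \pmod 6,\\ n-\tfrac13 n & \text{if } n\equiv 3 \pmod 6,\\ n+\tfrac13 (n+2) & \text{if } n\equiv 4 \pmod 6,\\ n-\tfrac16 (n+1) & \text{if } n\equiv 5 \pmod 6.\end{cases}$$
   Context: A Mondrian partition of an $n\times n$ square ($n$ a positive integer) is a dissection of the square into $k\ge 2$ non-overlapping rectangles with positive integer side lengths which are pairwise non-congruent (rectangles of dimensions $a\times b$ and $b\times a$ count as congruent). Its defect is the difference between the largest and the smallest area among its rectangles. For $k\ge 2$, $d_k(n)$ denotes the minimum defect over all Mondrian partitions of the $n\times n$ square using exactly $k$ rectangles. *)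

theory Defs
  imports Main
begin

text \<open>A rectangle with integer corners inside the n x n square is encoded as
  (x, y, w, h): lower-left corner (x,y), width w, height h.\<close>
type_synonym rect = "nat \<times> nat \<times> nat \<times> nat"

fun rwidth :: "rect \<Rightarrow> nat" where "rwidth (x, y, w, h) = w"
fun rheight :: "rect \<Rightarrow> nat" where "rheight (x, y, w, h) = h"
fun rarea :: "rect \<Rightarrow> nat" where "rarea (x, y, w, h) = w * h"

text \<open>unit cell [i,i+1] x [j,j+1] lies in the rectangle\<close>
fun covers :: "rect \<Rightarrow> nat \<Rightarrow> nat \<Rightarrow> bool" where
  "covers (x, y, w, h) i j \<longleftrightarrow> x \<le> i \<and> i < x + w \<and> y \<le> j \<and> j < y + h"

fun inside :: "nat \<Rightarrow> rect \<Rightarrow> bool" where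
  "inside n (x, y, w, h) \<longleftrightarrow> 0 < w \<and> 0 < h \<and> x + w \<le> n \<and> y + h \<le> n"

definition congruent :: "rect \<Rightarrow> rect \<Rightarrow> bool" where
  "congruent r s \<longleftrightarrow> {rwidth r, rheight r} = {rwidth s, rheight s}"

definition mondrian :: "nat \<Rightarrow> nat \<Rightarrow> rect set \<Rightarrow> bool" where
  "mondrian n k P \<longleftrightarrow> finite P \<and> card P = k \<and> k \<ge> 2 \<and>
     (\<forall>r\<in>P. inside n r) \<and>
     (\<forall>i<n. \<forall>j<n. \<exists>!r. r \<in> P \<and> covers r i j) \<and>
     (\<forall>r\<in>P. \<forall>s\<in>P. r \<noteq> s \<longrightarrow> \<not> congruent r s)"

definition defect :: "rect set \<Rightarrow> nat" where
  "defect P = Max (rarea ` P) - Min (rarea ` P)"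

definition d :: "nat \<Rightarrow> nat \<Rightarrow> nat" where
  "d k n = (LEAST v. \<exists>P. mondrian n k P \<and> v = defect P)"

end

theory Submission
  imports Defs
begin


lemma core:
  fixes n c t u D PA PB b q :: int
  assumes "n = 6*q + r" "r \<in> {0..5}" "q \<ge> 0" "n \<ge> 3" "c \<ge> 1" "t = n - 2*b" "t \<ge> 1" "3*c = 2*n - u"
    "D \<ge> PA" "2*D \<ge> PA + PB" "PA \<ge> c" "t \<ge> 2 \<Longrightarrow> PA \<ge> 2*c"
    "\<bar>u\<bar> \<ge> 1 \<Longrightarrow> PB \<ge> n" "\<bar>u\<bar> \<ge> 2 \<Longrightarrow> PB \<ge> 2*n" "\<bar>u\<bar> \<ge> 3 \<Longrightarrow> PB \<ge> 3*n" "PB \<ge> 0"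
  shows "(r = 0 \<longrightarrow> D \<ge> 8*q) \<and> (r = 1 \<longrightarrow> D \<ge> 5*q+1)
   \<and> (r = 2 \<longrightarrow> D \<ge> 8*q+2) \<and> (r = 3 \<longrightarrow> D \<ge> 4*q+2)
   \<and> (r = 4 \<longrightarrow> D \<ge> 8*q+6) \<and> (r = 5 \<longrightarrow> D \<ge> 5*q+4)"
proof -
  have par: "even r \<Longrightarrow> t \<ge> 2" using assms(1,6,7) by presburger
  have uc: "(u = 0 \<and> 3*c = 2*n) \<or> (u = 1 \<and> 3*c = 2*n-1) \<or> (u = -1 \<and> 3*c = 2*n+1) \<or> (u = 2 \<and> 3*c = 2*n-2) \<or> (u = -2 \<and> 3*c = 2*n+2) \<or> \<bar>u\<bar> \<ge> 3"
    using assms(8) by linarith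
  have r6: "r = 0 \<or> r = 1 \<or> r = 2 \<or> r = 3 \<or> r = 4 \<or> r = 5" using assms(2) by auto
  show ?thesis
    using r6
  proof (elim disjE)
    assume r: "r = 0"
    have ua: "u = 0 \<or> \<bar>u\<bar> \<ge> 3" using assms(1,8) r by presburger
    show ?thesis using ua r par assms
      by (elim disjE; simp?; linarith?)
  next
    assume r: "r = 1"
    have ua: "u = -1 \<or> u = 2 \<or> \<bar>u\<bar> \<ge> 3" using assms(1,8) r by presburger
    show ?thesis using ua r par assms
      by (elim disjE; simp?; linarith?)
  next
    assume r: "r = 2"
    have ua: "u = 1 \<or> u = -2 \<or> \<bar>u\<bar> \<ge> 3" using assms(1,8) r by presburger
    show ?thesis using ua r par assms
      by (elim disjE; simp?; linarith?)
  next
    assume r: "r = 3"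
    have ua: "u = 0 \<or> \<bar>u\<bar> \<ge> 3" using assms(1,8) r by presburger
    show ?thesis using ua r par assms
      by (elim disjE; simp?; linarith?)
  next
    assume r: "r = 4"
    have ua: "u = -1 \<or> u = 2 \<or> \<bar>u\<bar> \<ge> 3" using assms(1,8) r by presburger
    show ?thesis using ua r par assms
      by (elim disjE; simp?; linarith?)
  next
    assume r: "r = 5"
    have ua: "u = 1 \<or> u = -2 \<or> \<bar>u\<bar> \<ge> 3" using assms(1,8) r by presburger
    show ?thesis using ua r par assms
      by (elim disjE; simp?; linarith?)
  qed
qed

definition fval :: "nat \<Rightarrow> nat" where
 "fval n = (if n mod 6 = 0 then n + n div 3
     else if n mod 6 = 1 then n - (n - 1) div 6
     else if n mod 6 = 2 then n + (n - 2) div 3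
     else if n mod 6 = 3 then n - n div 3
     else if n mod 6 = 4 then n + (n + 2) div 3
     else n - (n + 1) div 6)"

lemma fc0: "n mod 6 = 0 \<Longrightarrow> fval n = 8*(n div 6)"
proof -
  assume h: "n mod 6 = 0"
  have f: "fval n = n + n div 3" using h by (simp add: fval_def)
  obtain q where "n = 6*q+0" using h by (metis div_mult_mod_eq mult.commute)
  then show ?thesis unfolding f by simp
qed

lemma fc1: "n mod 6 = 1 \<Longrightarrow> fval n = 5*(n div 6)+1"
proof -
  assume h: "n mod 6 = 1"
  have f: "fval n = n - (n - 1) div 6" using h by (simp add: fval_def)
  obtain q where "n = 6*q+1" using h by (metis div_mult_mod_eq mult.commute)
  then show ?thesis unfolding f by simp
qed

lemma fc2: "n mod 6 = 2 \<Longrightarrow> fval n = 8*(n div 6)+2"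
proof -
  assume h: "n mod 6 = 2"
  have f: "fval n = n + (n - 2) div 3" using h by (simp add: fval_def)
  obtain q where "n = 6*q+2" using h by (metis div_mult_mod_eq mult.commute)
  then show ?thesis unfolding f by simp
qed

lemma fc3: "n mod 6 = 3 \<Longrightarrow> fval n = 4*(n div 6)+2"
proof -
  assume h: "n mod 6 = 3"
  have f: "fval n = n - n div 3" using h by (simp add: fval_def)
  obtain q where "n = 6*q+3" using h by (metis div_mult_mod_eq mult.commute)
  then show ?thesis unfolding f by simp
qed

lemma fc4: "n mod 6 = 4 \<Longrightarrow> fval n = 8*(n div 6)+6"
proof -
  assume h: "n mod 6 = 4"
  have f: "fval n = n + (n + 2) div 3" using h by (simp add: fval_def)
  obtain q where "n = 6*q+4" using h by (metis div_mult_mod_eq mult.commute)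
  then show ?thesis unfolding f by simp
qed

lemma fc5: "n mod 6 = 5 \<Longrightarrow> fval n = 5*(n div 6)+4"
proof -
  assume h: "n mod 6 = 5"
  have f: "fval n = n - (n + 1) div 6" using h by (simp add: fval_def)
  obtain q where "n = 6*q+5" using h by (metis div_mult_mod_eq mult.commute)
  then show ?thesis unfolding f by simp
qed

lemmas fval_cases = fc0 fc1 fc2 fc3 fc4 fc5

lemma fval_le: "n \<ge> 3 \<Longrightarrow> fval n \<le> 2*n"
proof -
  assume "n \<ge> 3"
  have nn: "n = 6*(n div 6) + n mod 6" by simp
  have "n mod 6 = 0 \<or> n mod 6 = 1 \<or> n mod 6 = 2 \<or> n mod 6 = 3 \<or> n mod 6 = 4 \<or> n mod 6 = 5" by auto
  then show ?thesis using nn fval_cases[of n] \<open>n\<ge>3\<close> by (elim disjE; simp; linarith)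
qed

lemma L_bound0:
  fixes a c b n :: nat
  assumes "a + c = n" "0<a" "0<c" "0<b" "2*b < n" "n\<ge>3"
  shows "fval n \<le> Max {a*n, c*b, c*(n-b)} - Min {a*n, c*b, c*(n-b)}"
proof -
  define S where "S = {a*n, c*b, c*(n-b)}"
  define M where "M = Max S"
  define m where "m = Min S"
  have fin: "finite S" "S \<noteq> {}" unfolding S_def by auto
  have MX: "a*n \<le> M" "c*b \<le> M" "c*(n-b) \<le> M" unfolding M_def using fin by (auto simp: S_def)
  have mX: "m \<le> a*n" "m \<le> c*b" "m \<le> c*(n-b)" unfolding m_def using fin by (auto simp: S_def)
  define D where "D = M - m"
  have Di: "int D = int M - int m" unfolding D_def using MX mX by auto
  define nI where "nI = int n"
  define cI where "cI = int c"
  define bI where "bI = int b"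
  define t where "t = nI - 2*bI"
  define u where "u = 2*nI - 3*cI"
  define P1 where "P1 = cI*t"
  define P2 where "P2 = nI*\<bar>u\<bar>"
  have ia: "int a = nI - cI" using assms(1) unfolding nI_def cI_def by auto
  have X: "int (a*n) = (nI - cI)*nI" using ia unfolding nI_def by simp
  have Y: "int (c*b) = cI*bI" unfolding cI_def bI_def by simp
  have Z: "int (c*(n-b)) = cI*(nI - bI)" using assms(5) unfolding cI_def bI_def nI_def by (simp add: of_nat_diff)
  define Xi where "Xi = (nI - cI)*nI"
  define Yi where "Yi = cI*bI"
  define Zi where "Zi = cI*(nI - bI)"
  have iM: "Xi \<le> int M" "Yi \<le> int M" "Zi \<le> int M"
    using MX X Y Z unfolding Xi_def Yi_def Zi_def by (metis of_nat_le_iff)+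
  have im: "int m \<le> Xi" "int m \<le> Yi" "int m \<le> Zi"
    using mX X Y Z unfolding Xi_def Yi_def Zi_def by (metis of_nat_le_iff)+
  have e1: "P1 = Zi - Yi" unfolding P1_def t_def Zi_def Yi_def by (simp add: algebra_simps)
  have e2: "P1 + nI*u = 2*(Xi - Yi)" unfolding P1_def t_def u_def Xi_def Yi_def by (simp add: algebra_simps)
  have e3: "P1 - nI*u = 2*(Zi - Xi)" unfolding P1_def t_def u_def Zi_def Xi_def by (simp add: algebra_simps)
  have h1: "int D \<ge> P1" using e1 iM im Di by linarith
  have h2: "2*int D \<ge> P1 + P2"
  proof (cases "u \<ge> 0")
    case True then have "P2 = nI*u" unfolding P2_def by simp
    then show ?thesis using e2 iM im Di by (smt (verit))
  next
    case False then have "P2 = - (nI*u)" unfolding P2_def by simp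
    then show ?thesis using e3 iM im Di by (smt (verit))
  qed
  have tge: "t \<ge> 1" unfolding t_def nI_def bI_def using assms(5) by simp
  have c1: "cI \<ge> 1" unfolding cI_def using assms(3) by simp
  have n0: "nI \<ge> 0" unfolding nI_def by simp
  have h3: "P1 \<ge> cI" unfolding P1_def using mult_left_mono[OF tge] c1 by simp
  have h4: "t \<ge> 2 \<Longrightarrow> P1 \<ge> 2*cI" unfolding P1_def using mult_left_mono[of 2 t cI] c1 by simp
  have h5: "\<And>k. \<bar>u\<bar> \<ge> k \<Longrightarrow> P2 \<ge> k*nI" unfolding P2_def using mult_left_mono n0
    by (metis mult.commute)
  have P20: "P2 \<ge> 0" unfolding P2_def using n0 by simp
  define q where "q = int (n div 6)"
  define r where "r = int (n mod 6)"
  have nn: "n = 6*(n div 6) + n mod 6" by simp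
  have qr: "nI = 6*q + r" "r \<in> {0..5}" "q \<ge> 0" unfolding q_def r_def nI_def
    apply (metis nn of_nat_add of_nat_mult of_nat_numeral)
    by auto
  have C2: "(r = 0 \<longrightarrow> int D \<ge> 8*q) \<and> (r = 1 \<longrightarrow> int D \<ge> 5*q+1)
   \<and> (r = 2 \<longrightarrow> int D \<ge> 8*q+2) \<and> (r = 3 \<longrightarrow> int D \<ge> 4*q+2)
   \<and> (r = 4 \<longrightarrow> int D \<ge> 8*q+6) \<and> (r = 5 \<longrightarrow> int D \<ge> 5*q+4)"
    apply (rule core[where n=nI and q=q and r=r and c=cI and t=t and b=bI and u=u and D="int D" and PA=P1 and PB=P2])
    subgoal using qr by simp
    subgoal using qr by simp
    subgoal using qr by simp
    subgoal using assms(6) unfolding nI_def by simp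
    subgoal using c1 .
    subgoal using t_def .
    subgoal using tge .
    subgoal unfolding u_def by simp
    subgoal using h1 .
    subgoal using h2 .
    subgoal using h3 .
    subgoal using h4 .
    subgoal using h5[of 1] by simp
    subgoal using h5[of 2] by simp
    subgoal using h5[of 3] by simp
    subgoal using P20 .
    done
  have m6: "n mod 6 = 0 \<or> n mod 6 = 1 \<or> n mod 6 = 2 \<or> n mod 6 = 3 \<or> n mod 6 = 4 \<or> n mod 6 = 5" by auto
  have "fval n \<le> D"
    using m6 proof (elim disjE)
  qed (use C2 fval_cases[of n] in \<open>simp add: q_def r_def\<close>)+
  then show ?thesis unfolding D_def M_def m_def S_def .
qed

lemma L_bound:
  fixes a c b n :: nat
  assumes "a + c = n" "0<a" "0<c" "0<b" "b < n" "2*b \<noteq> n" "n\<ge>3"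
  shows "fval n \<le> Max {a*n, c*b, c*(n-b)} - Min {a*n, c*b, c*(n-b)}"
proof (cases "2*b < n")
  case True then show ?thesis using L_bound0 assms by blast
next
  case False
  have "2*(n-b) < n" using False assms by auto
  then have "fval n \<le> Max {a*n, c*(n-b), c*(n-(n-b))} - Min {a*n, c*(n-b), c*(n-(n-b))}"
    using L_bound0[of a c n "n-b"] assms by auto
  moreover have "n - (n-b) = b" using assms by auto
  ultimately show ?thesis by (simp add: insert_commute)
qed

lemma S_bound:
  fixes a c b n :: nat
  assumes "a + b + c = n" "0<a" "0<c" "0<b" "a \<noteq> b" "a \<noteq> c" "b \<noteq> c" "n\<ge>3"
  shows "fval n \<le> Max {a*n, b*n, c*n} - Min {a*n, b*n, c*n}"
proof -
  define S where "S = {a*n, b*n, c*n}"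
  have fin: "finite S" "S \<noteq> {}" unfolding S_def by auto
  define x where "x = max a (max b c)"
  define y where "y = min a (min b c)"
  have xy: "x \<in> {a,b,c}" "y \<in> {a,b,c}" "x \<ge> y + 2" unfolding x_def y_def
    using assms(5,6,7) by (auto simp: max_def min_def)
  have "x*n \<in> S" "y*n \<in> S" using xy unfolding S_def by auto
  then have "x*n \<le> Max S" "Min S \<le> y*n" using fin by auto
  moreover have "x*n \<ge> y*n + 2*n" using xy(3) by (metis add_mult_distrib mult_le_mono1)
  ultimately have "Max S - Min S \<ge> 2*n" by linarith
  then show ?thesis using fval_le[OF assms(8)] unfolding S_def by linarith
qed


definition ex1 :: "rect \<Rightarrow> rect \<Rightarrow> rect \<Rightarrow> nat \<Rightarrow> nat \<Rightarrow> bool" where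
 "ex1 A B C i j \<longleftrightarrow> (covers A i j \<and> \<not>covers B i j \<and> \<not>covers C i j) \<or>
    (\<not>covers A i j \<and> covers B i j \<and> \<not>covers C i j) \<or> (\<not>covers A i j \<and> \<not>covers B i j \<and> covers C i j)"

definition good :: "nat \<Rightarrow> rect \<Rightarrow> rect \<Rightarrow> rect \<Rightarrow> bool" where
 "good n A B C \<longleftrightarrow> inside n A \<and> inside n B \<and> inside n C \<and> \<not>congruent A B \<and> \<not>congruent A C
    \<and> \<not>congruent B C \<and> (\<forall>i<n. \<forall>j<n. ex1 A B C i j)"

abbreviation bound :: "nat \<Rightarrow> rect \<Rightarrow> rect \<Rightarrow> rect \<Rightarrow> bool" where
 "bound n A B C \<equiv> fval n \<le> Max (rarea ` {A,B,C}) - Min (rarea ` {A,B,C})"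

lemma congruent_sym: "congruent A B = congruent B A"
  unfolding congruent_def by auto

lemma good_swap12: "good n A B C \<Longrightarrow> good n B A C"
  unfolding good_def ex1_def using congruent_sym by blast

lemma good_swap23: "good n A B C \<Longrightarrow> good n A C B"
  unfolding good_def ex1_def using congruent_sym by blast

lemma bound_swap12: "bound n A B C \<Longrightarrow> bound n B A C"
  by (simp add: insert_commute)

lemma bound_swap23: "bound n A B C \<Longrightarrow> bound n A C B"
  by (simp add: insert_commute)

lemma two1:
  fixes xb yb wb hb xc yc wc hc x0 y0 W H :: nat
  assumes pos: "0<wb" "0<hb" "0<wc" "0<hc"
  and bd: "x0 \<le> xb" "xb+wb \<le> x0+W" "y0 \<le> yb" "yb+hb \<le> y0+H" "x0 \<le> xc" "xc+wc \<le> x0+W" "y0 \<le> yc" "yc+hc \<le> y0+H"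
  and cov: "\<And>i j. x0 \<le> i \<Longrightarrow> i < x0+W \<Longrightarrow> y0 \<le> j \<Longrightarrow> j < y0+H \<Longrightarrow> covers (xb,yb,wb,hb) i j \<noteq> covers (xc,yc,wc,hc) i j"
  and c0: "covers (xb,yb,wb,hb) x0 y0"
  shows "(wb = W \<and> wc = W \<and> hb + hc = H) \<or> (hb = H \<and> hc = H \<and> wb + wc = W)"
proof -
  have xb: "xb = x0" "yb = y0" using c0 bd by auto
  have own: "\<not> covers (xb,yb,wb,hb) xc yc" using cov[of xc yc] pos bd by auto
  have WH: "wb \<le> W" "hb \<le> H" using bd xb by auto
  consider "wb = W" "hb = H" | "wb < W" "hb < H" | "wb = W" "hb < H" | "wb < W" "hb = H" using WH by linarith
  then show ?thesis
  proof cases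
    case 1 then show ?thesis using own xb bd pos by auto
  next
    case 2
    have a: "covers (xc,yc,wc,hc) (x0+wb) y0" using cov[of "x0+wb" y0] 2 xb pos by auto
    have b: "covers (xc,yc,wc,hc) x0 (y0+hb)" using cov[of x0 "y0+hb"] 2 xb pos by auto
    have "covers (xc,yc,wc,hc) x0 y0" using a b bd by auto
    then show ?thesis using cov[of x0 y0] c0 pos 2 by auto
  next
    case 3
    have b: "covers (xc,yc,wc,hc) x0 (y0+hb)" using cov[of x0 "y0+hb"] 3 xb pos by auto
    have e: "covers (xc,yc,wc,hc) (x0+W-1) (y0+H-1)"
    proof -
      have "0 < W" "0 < H" using 3 pos by auto
      then have ne: "covers (xb,yb,wb,hb) (x0+W-1) (y0+H-1) \<noteq> covers (xc,yc,wc,hc) (x0+W-1) (y0+H-1)"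
        by (intro cov) auto
      have "\<not> covers (xb,yb,wb,hb) (x0+W-1) (y0+H-1)" using 3 xb \<open>0 < W\<close> \<open>0 < H\<close> by auto
      then show ?thesis using ne by auto
    qed
    have "xc = x0" "wc = W" "yc + hc = y0 + H" "yc \<le> y0 + hb" using b e bd by auto
    moreover have "yc \<ge> y0 + hb" using own xb 3 bd pos \<open>xc = x0\<close> by auto
    ultimately show ?thesis using 3 by auto
  next
    case 4
    have b: "covers (xc,yc,wc,hc) (x0+wb) y0" using cov[of "x0+wb" y0] 4 xb pos by auto
    have e: "covers (xc,yc,wc,hc) (x0+W-1) (y0+H-1)"
    proof -
      have "0 < W" "0 < H" using 4 pos by auto
      then have ne: "covers (xb,yb,wb,hb) (x0+W-1) (y0+H-1) \<noteq> covers (xc,yc,wc,hc) (x0+W-1) (y0+H-1)"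
        by (intro cov) auto
      have "\<not> covers (xb,yb,wb,hb) (x0+W-1) (y0+H-1)" using 4 xb \<open>0 < W\<close> \<open>0 < H\<close> by auto
      then show ?thesis using ne by auto
    qed
    have "yc = y0" "hc = H" "xc + wc = x0 + W" "xc \<le> x0 + wb" using b e bd by auto
    moreover have "xc \<ge> x0 + wb" using own xb 4 bd pos \<open>yc = y0\<close> by auto
    ultimately show ?thesis using 4 by auto
  qed
qed

lemma two:
  fixes xb yb wb hb xc yc wc hc x0 y0 W H :: nat
  assumes pos: "0<wb" "0<hb" "0<wc" "0<hc"
  and bd: "x0 \<le> xb" "xb+wb \<le> x0+W" "y0 \<le> yb" "yb+hb \<le> y0+H" "x0 \<le> xc" "xc+wc \<le> x0+W" "y0 \<le> yc" "yc+hc \<le> y0+H"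
  and cov: "\<And>i j. x0 \<le> i \<Longrightarrow> i < x0+W \<Longrightarrow> y0 \<le> j \<Longrightarrow> j < y0+H \<Longrightarrow> covers (xb,yb,wb,hb) i j \<noteq> covers (xc,yc,wc,hc) i j"
  shows "(wb = W \<and> wc = W \<and> hb + hc = H) \<or> (hb = H \<and> hc = H \<and> wb + wc = W)"
proof (cases "covers (xb,yb,wb,hb) x0 y0")
  case True then show ?thesis using two1[OF assms] by blast
next
  case False
  have "0 < W" "0 < H" using pos bd by auto
  then have "covers (xc,yc,wc,hc) x0 y0" using cov[of x0 y0] False by auto
  then have "(wc = W \<and> wb = W \<and> hc + hb = H) \<or> (hc = H \<and> hb = H \<and> wc + wb = W)"
    using two1[of wc hc wb hb x0 xc W y0 yc H xb yb] pos bd cov by fastforce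
  then show ?thesis by auto
qed


lemma vstrip:
  assumes g: "good n R B C" and R: "R = (xR,0,wR,n)" and e: "xR = 0 \<or> xR + wR = n" and n3: "n \<ge> 3"
  shows "bound n R B C"
proof -
  obtain xb yb wb hb where B: "B = (xb,yb,wb,hb)" by (cases B) auto
  obtain xc yc wc hc where C: "C = (xc,yc,wc,hc)" by (cases C) auto
  have ins: "0<wb" "0<hb" "xb+wb \<le> n" "yb+hb \<le> n" "0<wc" "0<hc" "xc+wc \<le> n" "yc+hc \<le> n" "0 < wR" "xR+wR \<le> n"
    using g unfolding good_def B C R by auto
  have nc: "\<not> congruent R B" "\<not> congruent R C" "\<not> congruent B C" using g unfolding good_def by auto
  have exc: "\<And>i j. i<n \<Longrightarrow> j<n \<Longrightarrow> ex1 R B C i j" using g unfolding good_def by auto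
  have colB: "\<not>(xR \<le> i \<and> i < xR+wR)" if "xb \<le> i" "i < xb+wb" for i
  proof -
    have "ex1 R B C i yb" using exc[of i yb] that ins by auto
    then show ?thesis using that unfolding ex1_def R B using ins by auto
  qed
  have colC: "\<not>(xR \<le> i \<and> i < xR+wR)" if "xc \<le> i" "i < xc+wc" for i
  proof -
    have "ex1 R B C i yc" using exc[of i yc] that ins by auto
    then show ?thesis using that unfolding ex1_def R C using ins by auto
  qed
  have wRn: "wR < n"
  proof (rule ccontr)
    assume "\<not> wR < n"
    then have "xR = 0" "wR = n" using ins by auto
    then show False using colB[of xb] ins by auto
  qed
  define x0 where "x0 = (if xR = 0 then wR else 0)"
  define W where "W = n - wR"
  have hx: "(x0 \<le> i \<and> i < x0 + W) \<longleftrightarrow> (i < n \<and> \<not>(xR \<le> i \<and> i < xR+wR))" for i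
    using e wRn unfolding x0_def W_def by auto
  have bdB: "x0 \<le> xb" "xb+wb \<le> x0+W"
    using hx[of xb] hx[of "xb+wb-1"] colB[of xb] colB[of "xb+wb-1"] ins by auto
  have bdC: "x0 \<le> xc" "xc+wc \<le> x0+W"
    using hx[of xc] hx[of "xc+wc-1"] colC[of xc] colC[of "xc+wc-1"] ins by auto
  have cov: "covers (xb,yb,wb,hb) i j \<noteq> covers (xc,yc,wc,hc) i j"
    if "x0 \<le> i" "i < x0+W" "0 \<le> j" "j < 0+n" for i j
  proof -
    have "i < n" "\<not>(xR \<le> i \<and> i < xR+wR)" using hx[of i] that by auto
    moreover have "ex1 R B C i j" using exc[of i j] that \<open>i<n\<close> by auto
    ultimately show ?thesis unfolding ex1_def R B C by auto
  qed
  have two: "(wb = W \<and> wc = W \<and> hb + hc = n) \<or> (hb = n \<and> hc = n \<and> wb + wc = W)"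
    using two[of wb hb wc hc x0 xb W 0 yb n xc yc] ins bdB bdC cov by auto
  have RA: "rarea ` {R,B,C} = {wR*n, wb*hb, wc*hc}" unfolding R B C by simp
  show ?thesis
  proof (cases "wb = W \<and> wc = W \<and> hb + hc = n")
    case True
    have "hb \<noteq> hc" using nc(3) True unfolding congruent_def B C by auto
    then have "2*hb \<noteq> n" using True by auto
    moreover have "hc = n - hb" using True by auto
    moreover have s1: "wR + (n - wR) = n" "0 < n - wR" "hb < n" using wRn True ins by auto
    ultimately have "fval n \<le> Max {wR*n, (n-wR)*hb, (n-wR)*(n-hb)} - Min {wR*n, (n-wR)*hb, (n-wR)*(n-hb)}"
      using L_bound[OF s1(1) ins(9) s1(2) ins(2) s1(3) _ n3] by blast
    then show ?thesis unfolding RA using True \<open>hc = n - hb\<close> unfolding W_def by simp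
  next
    case False
    then have F: "hb = n" "hc = n" "wb + wc = W" using two by auto
    have d1: "wR \<noteq> wb" using nc(1) F unfolding congruent_def B R by auto
    have d2: "wR \<noteq> wc" using nc(2) F unfolding congruent_def C R by auto
    have d3: "wb \<noteq> wc" using nc(3) F unfolding congruent_def B C by auto
    have sm: "wR + wb + wc = n" using F(3) wRn unfolding W_def by simp
    have "fval n \<le> Max {wR*n, wb*n, wc*n} - Min {wR*n, wb*n, wc*n}"
      by (rule S_bound[OF sm ins(9) ins(5) ins(1) d1 d2 d3 n3])
    then show ?thesis unfolding RA using F by simp
  qed
qed

fun tr :: "rect \<Rightarrow> rect" where "tr (x,y,w,h) = (y,x,h,w)"

lemma covers_tr: "covers (tr r) i j = covers r j i" by (cases r) auto
lemma inside_tr: "inside n (tr r) = inside n r" by (cases r) auto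
lemma rarea_tr: "rarea (tr r) = rarea r" by (cases r) auto
lemma congruent_tr: "congruent (tr r) (tr s) = congruent r s"
  by (cases r; cases s) (auto simp: congruent_def insert_commute)

lemma good_tr: "good n A B C \<Longrightarrow> good n (tr A) (tr B) (tr C)"
  unfolding good_def ex1_def by (simp add: covers_tr inside_tr congruent_tr)

lemma hstrip:
  assumes g: "good n R B C" and R: "R = (0,yR,n,hR)" and e: "yR = 0 \<or> yR + hR = n" and n3: "n \<ge> 3"
  shows "bound n R B C"
proof -
  have "bound n (tr R) (tr B) (tr C)"
    using vstrip[OF good_tr[OF g] _ e n3] R by simp
  then show ?thesis by (simp add: rarea_tr)
qed


lemma pairB:
  assumes g: "good n A B C" and c: "covers A 0 0" and n3: "n \<ge> 3"
  and p: "(covers B (n-1) 0 \<and> covers B (n-1) (n-1)) \<or> (covers B 0 (n-1) \<and> covers B (n-1) (n-1))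
     \<or> (covers B (n-1) 0 \<and> covers B 0 (n-1))"
  shows "bound n A B C"
proof -
  obtain xb yb wb hb where B: "B = (xb,yb,wb,hb)" by (cases B) auto
  have ins: "0<wb" "0<hb" "xb+wb \<le> n" "yb+hb \<le> n" using g unfolding good_def B by auto
  have "ex1 A B C 0 0" using g n3 unfolding good_def by auto
  then have nB: "\<not> covers B 0 0" using c unfolding ex1_def by auto
  consider "covers B (n-1) 0" "covers B (n-1) (n-1)" | "covers B 0 (n-1)" "covers B (n-1) (n-1)"
    | "covers B (n-1) 0" "covers B 0 (n-1)" using p by blast
  then show ?thesis
  proof cases
    case 1
    then have "yb = 0" "hb = n" "xb + wb = n" using ins n3 unfolding B by auto
    then have "bound n B A C" using vstrip[OF good_swap12[OF g], of xb wb] B n3 by auto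
    then show ?thesis by (rule bound_swap12)
  next
    case 2
    then have "xb = 0" "wb = n" "yb + hb = n" using ins n3 unfolding B by auto
    then have "bound n B A C" using hstrip[OF good_swap12[OF g], of yb hb] B n3 by auto
    then show ?thesis by (rule bound_swap12)
  next
    case 3
    then have "covers B 0 0" unfolding B by auto
    then show ?thesis using nB by blast
  qed
qed

lemma corner:
  assumes g: "good n A B C" and c: "covers A 0 0" and n3: "n \<ge> 3"
  shows "bound n A B C"
proof -
  obtain xa ya wa ha where A: "A = (xa,ya,wa,ha)" by (cases A) auto
  have ins: "0<wa" "0<ha" "xa+wa \<le> n" "ya+ha \<le> n" using g unfolding good_def A by auto
  have xy: "xa = 0" "ya = 0" using c unfolding A by auto
  have exc: "\<And>i j. i<n \<Longrightarrow> j<n \<Longrightarrow> ex1 A B C i j" using g unfolding good_def by auto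
  consider "ha = n" | "wa = n" | "wa < n" "ha < n" using ins xy by linarith
  then show ?thesis
  proof cases
    case 1
    then show ?thesis using vstrip[OF g, of 0 wa] A xy n3 by auto
  next
    case 2
    then show ?thesis using hstrip[OF g, of 0 ha] A xy n3 by auto
  next
    case 3
    have k1: "covers B (n-1) 0 \<or> covers C (n-1) 0"
      using exc[of "n-1" 0] n3 3 xy unfolding ex1_def A by auto
    have k2: "covers B 0 (n-1) \<or> covers C 0 (n-1)"
      using exc[of 0 "n-1"] n3 3 xy unfolding ex1_def A by auto
    have k3: "covers B (n-1) (n-1) \<or> covers C (n-1) (n-1)"
      using exc[of "n-1" "n-1"] n3 3 xy unfolding ex1_def A by auto
    have "((covers B (n-1) 0 \<and> covers B (n-1) (n-1)) \<or> (covers B 0 (n-1) \<and> covers B (n-1) (n-1))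
     \<or> (covers B (n-1) 0 \<and> covers B 0 (n-1))) \<or>
      ((covers C (n-1) 0 \<and> covers C (n-1) (n-1)) \<or> (covers C 0 (n-1) \<and> covers C (n-1) (n-1))
     \<or> (covers C (n-1) 0 \<and> covers C 0 (n-1)))" using k1 k2 k3 by blast
    then show ?thesis
    proof
      assume "(covers B (n-1) 0 \<and> covers B (n-1) (n-1)) \<or> (covers B 0 (n-1) \<and> covers B (n-1) (n-1))
     \<or> (covers B (n-1) 0 \<and> covers B 0 (n-1))"
      then show ?thesis using pairB[OF g c n3] by blast
    next
      assume "(covers C (n-1) 0 \<and> covers C (n-1) (n-1)) \<or> (covers C 0 (n-1) \<and> covers C (n-1) (n-1))
     \<or> (covers C (n-1) 0 \<and> covers C 0 (n-1))"
      then have "bound n A C B" using pairB[OF good_swap23[OF g] c n3] by blast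
      then show ?thesis by (rule bound_swap23)
    qed
  qed
qed

lemma good_bound:
  assumes g: "good n A B C" and n3: "n \<ge> 3"
  shows "bound n A B C"
proof -
  have "ex1 A B C 0 0" using g n3 unfolding good_def by auto
  then have "covers A 0 0 \<or> covers B 0 0 \<or> covers C 0 0" unfolding ex1_def by auto
  then show ?thesis
  proof (elim disjE)
    assume "covers A 0 0" then show ?thesis using corner[OF g _ n3] by blast
  next
    assume "covers B 0 0" then have "bound n B A C" using corner[OF good_swap12[OF g] _ n3] by blast
    then show ?thesis by (rule bound_swap12)
  next
    assume "covers C 0 0" then have "bound n C A B" using corner[OF good_swap12[OF good_swap23[OF g]] _ n3] by blast
    then have "bound n A C B" by (rule bound_swap12)
    then show ?thesis by (rule bound_swap23)
  qed
qed



lemma Lcons: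
  assumes "0<a" "a<n" "0<b" "b<n" "2*b \<noteq> n"
  shows "mondrian n 3 {(0,0,a,n),(a,0,n-a,b),(a,b,n-a,n-b)}"
    "defect {(0,0,a,n),(a,0,n-a,b),(a,b,n-a,n-b)} = Max {a*n, (n-a)*b, (n-a)*(n-b)} - Min {a*n, (n-a)*b, (n-a)*(n-b)}"
proof -
  let ?P = "{(0,0,a,n),(a,0,n-a,b),(a,b,n-a,n-b)} :: rect set"
  have dist: "(0,0,a,n) \<noteq> (a,0,n-a,b)" "(0,0,a,n) \<noteq> (a,b,n-a,n-b)" "(a,0,n-a,b) \<noteq> ((a,b,n-a,n-b)::rect)"
    using assms by auto
  have card: "card ?P = 3" using dist by simp
  have ins: "\<forall>r\<in>?P. inside n r" using assms by auto
  have cov: "\<forall>i<n. \<forall>j<n. \<exists>!r. r \<in> ?P \<and> covers r i j"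
  proof (intro allI impI)
    fix i j assume ij: "i < n" "j < n"
    show "\<exists>!r. r \<in> ?P \<and> covers r i j"
    proof (cases "i < a")
      case True then show ?thesis using ij assms by (intro ex1I[of _ "(0,0,a,n)"]) auto
    next
      case F: False
      show ?thesis
      proof (cases "j < b")
        case True then show ?thesis using ij assms F by (intro ex1I[of _ "(a,0,n-a,b)"]) auto
      next
        case False then show ?thesis using ij assms F by (intro ex1I[of _ "(a,b,n-a,n-b)"]) auto
      qed
    qed
  qed
  have nc: "\<forall>r\<in>?P. \<forall>s\<in>?P. r \<noteq> s \<longrightarrow> \<not> congruent r s"
    using assms by (auto simp: congruent_def doubleton_eq_iff)
  show "mondrian n 3 ?P" unfolding mondrian_def using card ins cov nc by auto
  show "defect ?P = Max {a*n, (n-a)*b, (n-a)*(n-b)} - Min {a*n, (n-a)*b, (n-a)*(n-b)}"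
    unfolding defect_def by (simp add: mult.commute)
qed

lemma mm1: "(Y::nat) \<le> X \<Longrightarrow> X \<le> Z \<Longrightarrow> Max {X,Y,Z} - Min {X,Y,Z} = Z - Y"
  by (simp add: max_def min_def)
lemma mm2: "(X::nat) \<le> Y \<Longrightarrow> Y \<le> Z \<Longrightarrow> Max {X,Y,Z} - Min {X,Y,Z} = Z - X"
  by (simp add: max_def min_def)
lemma mm3: "(Y::nat) \<le> Z \<Longrightarrow> Z \<le> X \<Longrightarrow> Max {X,Y,Z} - Min {X,Y,Z} = X - Y"
  by (simp add: max_def min_def)

lemma exists_opt:
  assumes n3: "n \<ge> 3"
  shows "\<exists>P. mondrian n 3 P \<and> fval n = defect P"
proof -
  obtain q where q: "n = 6*q + n mod 6" "q = n div 6" by (metis div_mult_mod_eq mult.commute)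
  have "\<exists>a b. 0<a \<and> a<n \<and> 0<b \<and> b<n \<and> 2*b \<noteq> n \<and>
     Max {a*n, (n-a)*b, (n-a)*(n-b)} - Min {a*n, (n-a)*b, (n-a)*(n-b)} = fval n"
  proof -
    have "n mod 6 = 0 \<or> n mod 6 = 1 \<or> n mod 6 = 2 \<or> n mod 6 = 3 \<or> n mod 6 = 4 \<or> n mod 6 = 5" by auto
    then show ?thesis
    proof (elim disjE)
      assume r: "n mod 6 = 0"
      define p where "p = q - 1"
      have p: "n = 6*p+6" using q r n3 unfolding p_def by linarith
      have f: "fval n = 8*p+8" using fc0[OF r] p by simp
      have e: "(2*p+2)*n = 12*(p*p) + 24*p + 12" "(n-(2*p+2))*(3*p+2) = 12*(p*p)+20*p+8"
        "(n-(2*p+2))*(n-(3*p+2)) = 12*(p*p)+28*p+16" unfolding p by (simp_all add: algebra_simps)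
      have m: "Max {(2*p+2)*n, (n-(2*p+2))*(3*p+2), (n-(2*p+2))*(n-(3*p+2))} - Min {(2*p+2)*n, (n-(2*p+2))*(3*p+2), (n-(2*p+2))*(n-(3*p+2))} = fval n" unfolding e f by (subst mm1) auto
      show ?thesis using p m by (intro exI[of _ "2*p+2"] exI[of _ "3*p+2"] conjI) auto
    next
      assume r: "n mod 6 = 1"
      define p where "p = q - 1"
      have p: "n = 6*p+7" using q r n3 unfolding p_def by linarith
      have f: "fval n = 5*p+6" using fc1[OF r] p by simp
      have e: "(2*p+2)*n = 12*(p*p) + 26*p + 14" "(n-(2*p+2))*(3*p+3) = 12*(p*p)+27*p+15"
        "(n-(2*p+2))*(n-(3*p+3)) = 12*(p*p)+31*p+20" unfolding p by (simp_all add: algebra_simps)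
      have m: "Max {(2*p+2)*n, (n-(2*p+2))*(3*p+3), (n-(2*p+2))*(n-(3*p+3))} - Min {(2*p+2)*n, (n-(2*p+2))*(3*p+3), (n-(2*p+2))*(n-(3*p+3))} = fval n" unfolding e f by (subst mm2) auto
      show ?thesis using p m by (intro exI[of _ "2*p+2"] exI[of _ "3*p+3"] conjI) auto
    next
      assume r: "n mod 6 = 2"
      define p where "p = q - 1"
      have p: "n = 6*p+8" using q r n3 unfolding p_def by linarith
      have f: "fval n = 8*p+10" using fc2[OF r] p by simp
      have e: "(2*p+3)*n = 12*(p*p) + 34*p + 24" "(n-(2*p+3))*(3*p+3) = 12*(p*p)+27*p+15"
        "(n-(2*p+3))*(n-(3*p+3)) = 12*(p*p)+35*p+25" unfolding p by (simp_all add: algebra_simps)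
      have m: "Max {(2*p+3)*n, (n-(2*p+3))*(3*p+3), (n-(2*p+3))*(n-(3*p+3))} - Min {(2*p+3)*n, (n-(2*p+3))*(3*p+3), (n-(2*p+3))*(n-(3*p+3))} = fval n" unfolding e f by (subst mm1) auto
      show ?thesis using p m by (intro exI[of _ "2*p+3"] exI[of _ "3*p+3"] conjI) auto
    next
      assume r: "n mod 6 = 3"
      then have p: "n = 6*q+3" using q by simp
      have f: "fval n = 4*q+2" using fc3[OF r] q by simp
      have e: "(2*q+1)*n = 12*(q*q) + 12*q + 3" "(n-(2*q+1))*(3*q+1) = 12*(q*q)+10*q+2"
        "(n-(2*q+1))*(n-(3*q+1)) = 12*(q*q)+14*q+4" unfolding p by (simp_all add: algebra_simps)
      have m: "Max {(2*q+1)*n, (n-(2*q+1))*(3*q+1), (n-(2*q+1))*(n-(3*q+1))} - Min {(2*q+1)*n, (n-(2*q+1))*(3*q+1), (n-(2*q+1))*(n-(3*q+1))} = fval n" unfolding e f by (subst mm1) auto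
      show ?thesis using p m by (intro exI[of _ "2*q+1"] exI[of _ "3*q+1"] conjI) auto
    next
      assume r: "n mod 6 = 4"
      then have p: "n = 6*q+4" using q by simp
      have f: "fval n = 8*q+6" using fc4[OF r] q by simp
      have e: "(2*q+1)*n = 12*(q*q) + 14*q + 4" "(n-(2*q+1))*(3*q+1) = 12*(q*q)+13*q+3"
        "(n-(2*q+1))*(n-(3*q+1)) = 12*(q*q)+21*q+9" unfolding p by (simp_all add: algebra_simps)
      have m: "Max {(2*q+1)*n, (n-(2*q+1))*(3*q+1), (n-(2*q+1))*(n-(3*q+1))} - Min {(2*q+1)*n, (n-(2*q+1))*(3*q+1), (n-(2*q+1))*(n-(3*q+1))} = fval n" unfolding e f by (subst mm1) auto
      show ?thesis using p m by (intro exI[of _ "2*q+1"] exI[of _ "3*q+1"] conjI) auto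
    next
      assume r: "n mod 6 = 5"
      then have p: "n = 6*q+5" using q by simp
      have f: "fval n = 5*q+4" using fc5[OF r] q by simp
      have e: "(2*q+2)*n = 12*(q*q) + 22*q + 10" "(n-(2*q+2))*(3*q+2) = 12*(q*q)+17*q+6"
        "(n-(2*q+2))*(n-(3*q+2)) = 12*(q*q)+21*q+9" unfolding p by (simp_all add: algebra_simps)
      have m: "Max {(2*q+2)*n, (n-(2*q+2))*(3*q+2), (n-(2*q+2))*(n-(3*q+2))} - Min {(2*q+2)*n, (n-(2*q+2))*(3*q+2), (n-(2*q+2))*(n-(3*q+2))} = fval n" unfolding e f by (subst mm3) auto
      show ?thesis using p m by (intro exI[of _ "2*q+2"] exI[of _ "3*q+2"] conjI) auto
    qed
  qed
  then obtain a b where ab: "0<a" "a<n" "0<b" "b<n" "2*b \<noteq> n"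
     "Max {a*n, (n-a)*b, (n-a)*(n-b)} - Min {a*n, (n-a)*b, (n-a)*(n-b)} = fval n" by blast
  show ?thesis using Lcons[OF ab(1-5)] ab(6) by metis
qed


lemma lower:
  assumes m: "mondrian n 3 P" and n3: "n \<ge> 3"
  shows "fval n \<le> defect P"
proof -
  have c: "card P = 3" using m unfolding mondrian_def by auto
  then obtain A B C where P: "P = {A,B,C}" "A \<noteq> B" "B \<noteq> C" "A \<noteq> C" unfolding card_3_iff by blast
  have ins: "inside n A" "inside n B" "inside n C" using m P unfolding mondrian_def by auto
  have nc: "\<not>congruent A B" "\<not>congruent A C" "\<not>congruent B C" using m P unfolding mondrian_def by auto
  have e: "ex1 A B C i j" if "i<n" "j<n" for i j
  proof -
    have u: "\<exists>!r. r \<in> {A,B,C} \<and> covers r i j" using m P that unfolding mondrian_def by auto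
    then show ?thesis unfolding ex1_def using P(2-4) by blast
  qed
  have "good n A B C" unfolding good_def using ins nc e by auto
  then have "bound n A B C" using good_bound n3 by blast
  then show ?thesis unfolding defect_def P .
qed

theorem mainTheorem2:
  fixes n :: nat
  assumes "n \<ge> 3"
  shows "d 3 n =
    (if n mod 6 = 0 then n + n div 3
     else if n mod 6 = 1 then n - (n - 1) div 6
     else if n mod 6 = 2 then n + (n - 2) div 3
     else if n mod 6 = 3 then n - n div 3
     else if n mod 6 = 4 then n + (n + 2) div 3
     else n - (n + 1) div 6)"
proof -
  have "d 3 n = fval n"
    unfolding d_def
  proof (rule Least_equality)
    show "\<exists>P. mondrian n 3 P \<and> fval n = defect P" using exists_opt[OF assms] .
  next
    fix y assume "\<exists>P. mondrian n 3 P \<and> y = defect P"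
    then show "fval n \<le> y" using lower assms by blast
  qed
  then show ?thesis unfolding fval_def .
qed

end
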